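(* Let $p$ be a projection in a C$^*$-algebra $A$. Then for every $g\in K_0(A)^+$, \[ s_g(p)=\begin{cases}1 & \text{if } [p]_0\not\leq g,\\ 0 & \text{if } [p]_0\leq g.\end{cases} \]
   Context: For a C$^*$-algebra $A$, $P(A)$ denotes the set of projections of $A$, $K_0(A)$ is the usual $K_0$-group with positive cone $K_0(A)^+=\{[p]_0 : p \text{ a projection in } M_n(A),\ n\geq1\}$, and $g\leq h$ means $h-g\in K_0(A)^+$. The singular value function of $a\in A$ is the function $s(a)\colon K_0(A)^+\to[0,\infty)$ defined by \[ s_g(a):=\inf\{\|a-ap\| \mid p\in P(A),\ [p]_0\leq g\},\qquad g\in K_0(A)^+. \] *)

theory Defs
  imports "HOL-Analysis.Analysis"
begin

text \<open>A (possibly non-unital) C*-algebra: a Banach algebra (type class, giving completeness,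
 associative multiplication without unit, submultiplicative norm) together with a complex
 scalar multiplication extending the real one and an involution satisfying the C*-identity.\<close>

definition cstar_algebra ::
  "('a::{banach,real_normed_algebra} \<Rightarrow> 'a) \<Rightarrow> (complex \<Rightarrow> 'a \<Rightarrow> 'a) \<Rightarrow> bool" where
  "cstar_algebra st sc \<longleftrightarrow>
     (\<forall>c x y. sc c (x + y) = sc c x + sc c y) \<and>
     (\<forall>c d x. sc (c + d) x = sc c x + sc d x) \<and>
     (\<forall>c d x. sc c (sc d x) = sc (c * d) x) \<and>
     (\<forall>x. sc 1 x = x) \<and>
     (\<forall>r x. sc (complex_of_real r) x = scaleR r x) \<and>
     (\<forall>c x y. sc c (x * y) = sc c x * y \<and> sc c (x * y) = x * sc c y) \<and>
     (\<forall>c x. norm (sc c x) = cmod c * norm x) \<and>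
     (\<forall>x y. st (x + y) = st x + st y) \<and>
     (\<forall>c x. st (sc c x) = sc (cnj c) (st x)) \<and>
     (\<forall>x y. st (x * y) = st y * st x) \<and>
     (\<forall>x. st (st x) = x) \<and>
     (\<forall>x. norm (st x * x) = (norm x)\<^sup>2)"

definition is_proj :: "('a::ring \<Rightarrow> 'a) \<Rightarrow> 'a \<Rightarrow> bool" where
  "is_proj st p \<longleftrightarrow> p * p = p \<and> st p = p"

text \<open>A matrix is a function nat => nat => 'b; it is an m x n matrix if it vanishes outside
 the index range {..<m} x {..<n}.\<close>

definition msupp :: "nat \<Rightarrow> nat \<Rightarrow> (nat \<Rightarrow> nat \<Rightarrow> 'b::zero) \<Rightarrow> bool" where
  "msupp m n x \<longleftrightarrow> (\<forall>i j. (m \<le> i \<or> n \<le> j) \<longrightarrow> x i j = 0)"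

definition mmul :: "('b \<Rightarrow> 'b \<Rightarrow> 'b) \<Rightarrow> nat \<Rightarrow> (nat \<Rightarrow> nat \<Rightarrow> 'b::comm_monoid_add)
    \<Rightarrow> (nat \<Rightarrow> nat \<Rightarrow> 'b) \<Rightarrow> nat \<Rightarrow> nat \<Rightarrow> 'b" where
  "mmul mul k x y = (\<lambda>i j. \<Sum>l<k. mul (x i l) (y l j))"

definition madj :: "('b \<Rightarrow> 'b) \<Rightarrow> (nat \<Rightarrow> nat \<Rightarrow> 'b) \<Rightarrow> nat \<Rightarrow> nat \<Rightarrow> 'b" where
  "madj st x = (\<lambda>i j. st (x j i))"

definition mproj :: "('b \<Rightarrow> 'b \<Rightarrow> 'b) \<Rightarrow> ('b \<Rightarrow> 'b) \<Rightarrow> nat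
    \<Rightarrow> (nat \<Rightarrow> nat \<Rightarrow> 'b::comm_monoid_add) \<Rightarrow> bool" where
  "mproj mul st n e \<longleftrightarrow> msupp n n e \<and> mmul mul n e e = e \<and> madj st e = e"

definition mvn :: "('b \<Rightarrow> 'b \<Rightarrow> 'b) \<Rightarrow> ('b \<Rightarrow> 'b) \<Rightarrow> nat \<Rightarrow> (nat \<Rightarrow> nat \<Rightarrow> 'b::comm_monoid_add)
    \<Rightarrow> nat \<Rightarrow> (nat \<Rightarrow> nat \<Rightarrow> 'b) \<Rightarrow> bool" where
  "mvn mul st m e n f \<longleftrightarrow>
     (\<exists>v. msupp n m v \<and> mmul mul n (madj st v) v = e \<and> mmul mul m v (madj st v) = f)"

definition dsum :: "nat \<Rightarrow> (nat \<Rightarrow> nat \<Rightarrow> 'b::zero) \<Rightarrow> nat \<Rightarrow> (nat \<Rightarrow> nat \<Rightarrow> 'b) \<Rightarrow> nat \<Rightarrow> nat \<Rightarrow> 'b" where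
  "dsum m x n y = (\<lambda>i j. if i < m \<and> j < m then x i j
                         else if m \<le> i \<and> m \<le> j \<and> i < m + n \<and> j < m + n then y (i - m) (j - m)
                         else 0)"

definition elem_mat :: "'b::zero \<Rightarrow> nat \<Rightarrow> nat \<Rightarrow> 'b" where
  "elem_mat a = (\<lambda>i j. if i = 0 \<and> j = 0 then a else 0)"

definition umul :: "(complex \<Rightarrow> 'a::ring \<Rightarrow> 'a) \<Rightarrow> 'a \<times> complex \<Rightarrow> 'a \<times> complex \<Rightarrow> 'a \<times> complex" where
  "umul sc x y = (fst x * fst y + sc (snd x) (fst y) + sc (snd y) (fst x), snd x * snd y)"

definition ustar :: "('a \<Rightarrow> 'a) \<Rightarrow> 'a \<times> complex \<Rightarrow> 'a \<times> complex" where
  "ustar st x = (st (fst x), cnj (snd x))"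

definition uemb :: "(nat \<Rightarrow> nat \<Rightarrow> 'a) \<Rightarrow> nat \<Rightarrow> nat \<Rightarrow> 'a \<times> complex" where
  "uemb x = (\<lambda>i j. (x i j, 0))"

text \<open>Elements of P_infinity(A) are pairs (n, e) with e a projection in M_n(A).
 K_0(A) is the kernel of K_0(A~) -> K_0(C), where K_0(A~) is the Grothendieck group of
 D(A~) = P_infinity(A~)/~_0.  For e, f in P_infinity(A):
 [e]_0 = [f]_0 in K_0(A~) iff there is s in P_infinity(A~) with diag(e,s) ~_0 diag(f,s).\<close>
definition K0_eq :: "('a::{banach,real_normed_algebra} \<Rightarrow> 'a) \<Rightarrow> (complex \<Rightarrow> 'a \<Rightarrow> 'a)
    \<Rightarrow> nat \<times> (nat \<Rightarrow> nat \<Rightarrow> 'a) \<Rightarrow> nat \<times> (nat \<Rightarrow> nat \<Rightarrow> 'a) \<Rightarrow> bool" where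
  "K0_eq st sc E F \<longleftrightarrow>
     (\<exists>k s. mproj (umul sc) (ustar st) k s \<and>
        mvn (umul sc) (ustar st)
          (fst E + k) (dsum (fst E) (uemb (snd E)) k s)
          (fst F + k) (dsum (fst F) (uemb (snd F)) k s))"

text \<open>[e]_0 <= [f]_0 iff [f]_0 - [e]_0 lies in K_0(A)^+ = {[r]_0 | r in P_infinity(A)},
 i.e. iff [f]_0 = [diag(e,r)]_0 for some r in P_infinity(A).\<close>
definition K0_le :: "('a::{banach,real_normed_algebra} \<Rightarrow> 'a) \<Rightarrow> (complex \<Rightarrow> 'a \<Rightarrow> 'a)
    \<Rightarrow> nat \<times> (nat \<Rightarrow> nat \<Rightarrow> 'a) \<Rightarrow> nat \<times> (nat \<Rightarrow> nat \<Rightarrow> 'a) \<Rightarrow> bool" where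
  "K0_le st sc E F \<longleftrightarrow>
     (\<exists>k r. mproj (*) st k r \<and> K0_eq st sc (fst E + k, dsum (fst E) (snd E) k r) F)"

text \<open>s_g(a) for g = [q]_0 in K_0(A)^+, q a projection in M_n(A).\<close>
definition sval :: "('a::{banach,real_normed_algebra} \<Rightarrow> 'a) \<Rightarrow> (complex \<Rightarrow> 'a \<Rightarrow> 'a)
    \<Rightarrow> nat \<times> (nat \<Rightarrow> nat \<Rightarrow> 'a) \<Rightarrow> 'a \<Rightarrow> real" where
  "sval st sc G a = Inf {norm (a - a * p) | p. is_proj st p \<and> K0_le st sc (1, elem_mat p) G}"

end

theory Submission
  imports Defs "HOL-Computational_Algebra.Formal_Power_Series"
begin

locale invring =
  fixes mul :: "'b::ab_group_add \<Rightarrow> 'b \<Rightarrow> 'b" and stb :: "'b \<Rightarrow> 'b"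
  assumes assoc: "mul (mul a b) c = mul a (mul b c)"
    and distl: "mul (a + b) c = mul a c + mul b c"
    and distr: "mul a (b + c) = mul a b + mul a c"
    and st_add: "stb (a + b) = stb a + stb b"
    and st_mul: "stb (mul a b) = mul (stb b) (stb a)"
    and st_st: "stb (stb a) = a"
begin

lemma mul0l[simp]: "mul 0 a = 0"
  using distl[of 0 0 a] by simp
lemma mul0r[simp]: "mul a 0 = 0"
  using distr[of a 0 0] by simp
lemma st0[simp]: "stb 0 = 0"
  using st_add[of 0 0] by simp

lemma mul_sum_left: "mul (\<Sum>i\<in>A. f i) c = (\<Sum>i\<in>A. mul (f i) c)"
  by (induction A rule: infinite_finite_induct) (auto simp: distl)
lemma mul_sum_right: "mul c (\<Sum>i\<in>A. f i) = (\<Sum>i\<in>A. mul c (f i))"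
  by (induction A rule: infinite_finite_induct) (auto simp: distr)
lemma st_sum: "stb (\<Sum>i\<in>A. f i) = (\<Sum>i\<in>A. stb (f i))"
  by (induction A rule: infinite_finite_induct) (auto simp: st_add)

lemma mmul_assoc: "mmul mul k1 (mmul mul k2 x y) z = mmul mul k2 x (mmul mul k1 y z)"
proof (rule ext, rule ext)
  fix i j
  have "mmul mul k1 (mmul mul k2 x y) z i j = (\<Sum>l<k1. \<Sum>m<k2. mul (mul (x i m) (y m l)) (z l j))"
    by (simp add: mmul_def mul_sum_left)
  also have "\<dots> = (\<Sum>m<k2. \<Sum>l<k1. mul (x i m) (mul (y m l) (z l j)))"
    by (subst sum.swap) (simp add: assoc)
  also have "\<dots> = mmul mul k2 x (mmul mul k1 y z) i j"
    by (simp add: mmul_def mul_sum_right)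
  finally show "mmul mul k1 (mmul mul k2 x y) z i j = mmul mul k2 x (mmul mul k1 y z) i j" .
qed

lemma madj_mmul: "madj stb (mmul mul k x y) = mmul mul k (madj stb y) (madj stb x)"
  by (auto simp: madj_def mmul_def st_sum st_mul)

lemma madj_madj[simp]: "madj stb (madj stb x) = x"
  by (simp add: madj_def st_st)

definition blk :: "nat \<Rightarrow> nat \<Rightarrow> (nat \<Rightarrow> nat \<Rightarrow> 'b) \<Rightarrow> nat \<Rightarrow> nat \<Rightarrow> (nat \<Rightarrow> nat \<Rightarrow> 'b) \<Rightarrow> nat \<Rightarrow> nat \<Rightarrow> 'b" where
  "blk b a v d c w = (\<lambda>i j. if i < b \<and> j < a then v i j else if b \<le> i \<and> a \<le> j then w (i - b) (j - a) else 0)"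

lemma madj_blk: "madj stb (blk b a v d c w) = blk a b (madj stb v) c d (madj stb w)"
  by (auto simp: madj_def blk_def fun_eq_iff)

lemma sum_split_add: fixes b d :: nat shows "(\<Sum>l<b + d. f l :: 'c::comm_monoid_add) = (\<Sum>l<b. f l) + (\<Sum>l<d. f (b + l))"
  by (induction d) (auto simp: add.assoc)

lemma mmul_blk: "mmul mul (b + d) (blk a b X c d Y) (blk b a' v d c' w) = blk a a' (mmul mul b X v) c c' (mmul mul d Y w)"
proof (rule ext, rule ext)
  fix i j
  show "mmul mul (b + d) (blk a b X c d Y) (blk b a' v d c' w) i j = blk a a' (mmul mul b X v) c c' (mmul mul d Y w) i j"
    unfolding mmul_def sum_split_add by (auto simp: blk_def)
qed

lemma dsum_blk: "msupp n n y \<Longrightarrow> dsum m x n y = blk m m x n n y"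
  by (auto simp: dsum_def blk_def msupp_def fun_eq_iff)

lemma msupp_mmul: "msupp a b x \<Longrightarrow> msupp b c y \<Longrightarrow> msupp a c (mmul mul k x y)"
  by (auto simp: msupp_def mmul_def)
lemma msupp_madj: "msupp a b x \<Longrightarrow> msupp b a (madj stb x)"
  by (auto simp: msupp_def madj_def)

lemma mvn_supp: assumes "mvn mul stb a e b f" shows "msupp a a e" "msupp b b f"
  using assms unfolding mvn_def by (auto intro!: msupp_mmul msupp_madj)

lemma mvn_dsum:
  assumes "mvn mul stb a e b f" "mvn mul stb c e' d f'"
  shows "mvn mul stb (a + c) (dsum a e c e') (b + d) (dsum b f d f')"
proof -
  from assms(1) obtain v where v: "msupp b a v" "mmul mul b (madj stb v) v = e" "mmul mul a v (madj stb v) = f"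
    unfolding mvn_def by blast
  from assms(2) obtain w where w: "msupp d c w" "mmul mul d (madj stb w) w = e'" "mmul mul c w (madj stb w) = f'"
    unfolding mvn_def by blast
  have s1: "msupp c c e'" "msupp d d f'" using mvn_supp[OF assms(2)] by auto
  let ?B = "blk b a v d c w"
  have "msupp (b + d) (a + c) ?B" using v(1) w(1) by (auto simp: msupp_def blk_def)
  moreover have "mmul mul (b + d) (madj stb ?B) ?B = dsum a e c e'"
    using v w s1 by (simp add: madj_blk mmul_blk dsum_blk)
  moreover have "mmul mul (a + c) ?B (madj stb ?B) = dsum b f d f'"
    using v w s1 by (simp add: madj_blk mmul_blk dsum_blk)
  ultimately show ?thesis unfolding mvn_def by blast
qed

lemma madj_dsum: "madj stb (dsum m x n y) = dsum m (madj stb x) n (madj stb y)"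
  by (auto simp: madj_def dsum_def fun_eq_iff)

lemma mproj_dsum:
  assumes "mproj mul stb m x" "mproj mul stb n y"
  shows "mproj mul stb (m + n) (dsum m x n y)"
proof -
  have x: "msupp m m x" "mmul mul m x x = x" "madj stb x = x" and y: "msupp n n y" "mmul mul n y y = y" "madj stb y = y"
    using assms unfolding mproj_def by auto
  have "msupp (m + n) (m + n) (dsum m x n y)" using x y by (auto simp: msupp_def dsum_def)
  moreover have "mmul mul (m + n) (dsum m x n y) (dsum m x n y) = dsum m x n y"
    using x y by (simp add: dsum_blk mmul_blk)
  moreover have "madj stb (dsum m x n y) = dsum m x n y"
    using x y by (simp add: madj_dsum)
  ultimately show ?thesis unfolding mproj_def by blast
qed

lemma mvn_refl: "mproj mul stb a e \<Longrightarrow> mvn mul stb a e a e"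
  unfolding mproj_def mvn_def by auto

lemma mvn_compose:
  assumes "mproj mul stb a e" "mproj mul stb c g" "mvn mul stb a e b f" "mvn mul stb b f c g"
  shows "mvn mul stb a e c g"
proof -
  from assms(3) obtain v where v: "msupp b a v" "mmul mul b (madj stb v) v = e" "mmul mul a v (madj stb v) = f"
    unfolding mvn_def by blast
  from assms(4) obtain u where u: "msupp c b u" "mmul mul c (madj stb u) u = f" "mmul mul b u (madj stb u) = g"
    unfolding mvn_def by blast
  have ee: "mmul mul a e e = e" and gg: "mmul mul c g g = g" using assms(1,2) by (auto simp: mproj_def)
  let ?t = "mmul mul b u v"
  have "msupp c a ?t" using u(1) v(1) by (rule msupp_mmul)
  moreover have "mmul mul c (madj stb ?t) ?t = e"
  proof -
    have "mmul mul c (madj stb ?t) ?t = mmul mul b (madj stb v) (mmul mul b (mmul mul c (madj stb u) u) v)"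
      by (simp add: madj_mmul mmul_assoc)
    also have "\<dots> = mmul mul b (madj stb v) (mmul mul a v e)"
      by (simp add: u(2) v(3)[symmetric] mmul_assoc v(2))
    also have "\<dots> = mmul mul a e e"
      by (simp add: mmul_assoc[symmetric] v(2))
    finally show ?thesis using ee by simp
  qed
  moreover have "mmul mul a ?t (madj stb ?t) = g"
  proof -
    have "mmul mul a ?t (madj stb ?t) = mmul mul b u (mmul mul b (mmul mul a v (madj stb v)) (madj stb u))"
      by (simp add: madj_mmul mmul_assoc)
    also have "\<dots> = mmul mul b u (mmul mul c (madj stb u) g)"
      by (simp add: v(3) u(2)[symmetric] mmul_assoc u(3))
    also have "\<dots> = mmul mul c g g"
      by (simp add: mmul_assoc[symmetric] u(3))
    finally show ?thesis using gg by simp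
  qed
  ultimately show ?thesis unfolding mvn_def by blast
qed

end

primrec xpow :: "'a::times \<Rightarrow> 'a \<Rightarrow> nat \<Rightarrow> 'a" where
  "xpow p x 0 = p" | "xpow p x (Suc n) = x * xpow p x n"

locale cstar =
  fixes st :: "'a::{banach,real_normed_algebra} \<Rightarrow> 'a" and sc :: "complex \<Rightarrow> 'a \<Rightarrow> 'a"
  assumes cs: "cstar_algebra st sc"
begin

lemma sc_add1: "sc c (x + y) = sc c x + sc c y" using cs by (simp add: cstar_algebra_def)
lemma sc_add2: "sc (c + d) x = sc c x + sc d x" using cs by (simp add: cstar_algebra_def)
lemma sc_sc: "sc c (sc d x) = sc (c * d) x" using cs by (simp add: cstar_algebra_def)
lemma sc_real: "sc (complex_of_real r) x = scaleR r x" using cs by (simp add: cstar_algebra_def)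
lemma sc_mult1: "sc c x * y = sc c (x * y)" using cs by (simp add: cstar_algebra_def)
lemma sc_mult2: "x * sc c y = sc c (x * y)" using cs unfolding cstar_algebra_def by metis
lemma st_add: "st (x + y) = st x + st y" using cs by (simp add: cstar_algebra_def)
lemma st_sc: "st (sc c x) = sc (cnj c) (st x)" using cs by (simp add: cstar_algebra_def)
lemma st_mult: "st (x * y) = st y * st x" using cs by (simp add: cstar_algebra_def)
lemma st_st[simp]: "st (st x) = x" using cs by (simp add: cstar_algebra_def)
lemma cid: "norm (st x * x) = (norm x)\<^sup>2" using cs by (simp add: cstar_algebra_def)

lemma sc0[simp]: "sc 0 x = 0" using sc_real[of 0 x] by simp
lemma st0[simp]: "st 0 = 0" using st_add[of 0 0] by simp
lemma st_minus: "st (- x) = - st x" using st_add[of x "-x"] add.inverse_unique[of "st x" "st (-x)"] by simp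
lemma st_diff: "st (x - y) = st x - st y" using st_add[of x "-y"] by (simp add: st_minus)
lemma st_scaleR: "st (scaleR r x) = scaleR r (st x)"
  using st_sc[of "complex_of_real r" x] by (simp add: sc_real)

lemma norm_st_le: "norm x \<le> norm (st x)"
proof (cases "norm x = 0")
  case False
  have "(norm x)^2 \<le> norm (st x) * norm x" using cid[of x] norm_mult_ineq[of "st x" x] by simp
  then show ?thesis using False by (simp add: power2_eq_square)
qed simp

lemma norm_st[simp]: "norm (st x) = norm x"
  using norm_st_le[of x] norm_st_le[of "st x"] by simp

lemma cid2: "norm (x * st x) = (norm x)\<^sup>2"
  using cid[of "st x"] by simp

lemma bl_st: "bounded_linear st"
  by (rule bounded_linear_intro[of _ 1]) (auto simp: st_add st_scaleR)

lemma proj_norm: assumes "is_proj st p" shows "norm p \<le> 1" "p \<noteq> 0 \<Longrightarrow> norm p = 1"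
proof -
  have "(norm p)^2 = norm p" using cid[of p] assms by (simp add: is_proj_def)
  then have "norm p = 0 \<or> norm p = 1" by (simp add: power2_eq_square)
  then show "norm p \<le> 1" "p \<noteq> 0 \<Longrightarrow> norm p = 1" by auto
qed

end

lemma c_bound: "\<bar>(-1/2::real) gchoose n\<bar> \<le> 1"
proof -
  have "\<bar>\<Prod>i = 0..<n. (-1/2::real) - of_nat i\<bar> \<le> fact n"
  proof (induction n)
    case (Suc n)
    have "\<bar>\<Prod>i = 0..<Suc n. (-1/2::real) - of_nat i\<bar> = \<bar>\<Prod>i = 0..<n. (-1/2::real) - of_nat i\<bar> * (1/2 + of_nat n)"
      by (simp add: prod.atLeast0_lessThan_Suc abs_mult)
    also have "\<dots> \<le> fact n * (of_nat n + 1)"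
      by (rule mult_mono) (use Suc in auto)
    also have "\<dots> = fact (Suc n)" by (simp add: algebra_simps)
    finally show ?case .
  qed simp
  then have "\<bar>fact n * ((-1/2::real) gchoose n)\<bar> \<le> fact n"
    by (simp only: gbinomial_mult_fact)
  then show ?thesis by (simp add: abs_mult)
qed

lemma c_conv: "(\<Sum>i\<le>n. ((-1)^i * ((-1/2::real) gchoose i)) * ((-1)^(n-i) * ((-1/2::real) gchoose (n-i)))) = 1"
proof -
  have "(\<Sum>i\<le>n. ((-1)^i * ((-1/2::real) gchoose i)) * ((-1)^(n-i) * ((-1/2::real) gchoose (n-i))))
      = (\<Sum>i\<le>n. (-1)^n * (((-1/2::real) gchoose i) * ((-1/2::real) gchoose (n-i))))"
  proof (rule sum.cong[OF refl])
    fix i assume "i \<in> {..n}"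
    then have "(-1::real)^i * (-1)^(n-i) = (-1)^n" by (simp flip: power_add)
    then show "((-1)^i * ((-1/2::real) gchoose i)) * ((-1)^(n-i) * ((-1/2::real) gchoose (n-i)))
      = (-1)^n * (((-1/2::real) gchoose i) * ((-1/2::real) gchoose (n-i)))"
      by (metis (no_types, lifting) mult.assoc mult.left_commute)
  qed
  also have "\<dots> = (-1)^n * ((-1::real) gchoose n)"
    using gbinomial_Vandermonde[of "-1/2::real" "-1/2" n]
    unfolding sum_distrib_left[symmetric] by (simp add: atLeast0AtMost)
  also have "((-1::real) gchoose n) = (-1)^n"
    using gbinomial_negated_upper[of "-1::real" n] binomial_gbinomial[of n n, where 'a=real] by simp
  finally show ?thesis by (simp flip: power_add)
qed

context cstar begin

lemma partial_iso:
  assumes p: "is_proj st p" and r: "is_proj st r" and lt: "norm (p - p * r) < 1"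
  shows "\<exists>w. st w * w = p \<and> r * w = w \<and> w * p = w"
proof -
  have pp: "p * p = p" "st p = p" using p by (auto simp: is_proj_def)
  have rr: "r * r = r" "st r = r" using r by (auto simp: is_proj_def)
  define x where "x = p - p * r * p"
  have ppz: "p * (p * z) = p * z" for z by (simp add: pp flip: mult.assoc)
  have px: "p * x = x" "x * p = x"
    by (simp_all add: x_def left_diff_distrib right_diff_distrib pp mult.assoc ppz)
  have stx: "st x = x" by (simp add: x_def st_diff st_mult pp rr mult.assoc)
  define y where "y = p - p * r"
  have "y * st y = (p - p * r) * (p - r * p)" by (simp add: y_def st_diff st_mult pp rr)
  also have "\<dots> = x"
  proof -
    have "(p - p * r) * (p - r * p) = p * p - p * r * p - p * (r * p) + p * (r * r) * p"
      by (simp add: algebra_simps mult.assoc)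
    then show ?thesis by (simp add: pp rr x_def mult.assoc)
  qed
  finally have xy: "x = y * st y" by simp
  have nx: "norm x < 1"
  proof -
    have "norm x = (norm y)^2" using xy cid2[of y] by simp
    moreover have "(norm y)^2 < 1" using lt by (simp add: y_def abs_square_less_1)
    ultimately show ?thesis by simp
  qed
  let ?X = "xpow p x"
  have pX: "p * ?X n = ?X n" for n
    by (induction n) (simp_all add: pp flip: mult.assoc add: px)
  have Xp: "?X n * p = ?X n" for n
    by (induction n) (simp_all add: pp mult.assoc)
  have Xadd: "?X m * ?X n = ?X (m + n)" for m n
    by (induction m) (simp_all add: pX mult.assoc)
  have Xx: "?X n * x = ?X (Suc n)" for n
    using Xadd[of n 1] px by simp
  have xX: "x * ?X n = ?X n * x" for n using Xx[of n] by simp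
  have Xst: "st (?X n) = ?X n" for n
    by (induction n) (simp_all add: pp st_mult stx Xx)
  have Xn: "norm (?X n) \<le> norm x ^ n" for n
  proof (induction n)
    case 0 then show ?case using proj_norm(1)[OF p] by simp
  next
    case (Suc n)
    have "norm (?X (Suc n)) \<le> norm x * norm (?X n)" by (simp add: norm_mult_ineq)
    also have "\<dots> \<le> norm x * norm x ^ n" by (rule mult_left_mono[OF Suc]) simp
    finally show ?case by simp
  qed
  have Xlim: "?X \<longlonglongrightarrow> 0"
    by (rule Lim_null_comparison[where g="\<lambda>n. norm x ^ n"]) (use Xn nx in \<open>auto intro!: LIMSEQ_power_zero\<close>)
  define c where "c n = (-1)^n * ((-1/2::real) gchoose n)" for n
  have cb: "\<bar>c n\<bar> \<le> 1" for n using c_bound[of n] by (simp add: c_def abs_mult)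
  define bt where "bt n = scaleR (c n) (?X n)" for n
  have btn: "norm (bt n) \<le> norm x ^ n" for n
  proof -
    have "norm (bt n) = \<bar>c n\<bar> * norm (?X n)" by (simp add: bt_def)
    also have "\<dots> \<le> 1 * norm x ^ n" by (rule mult_mono) (use cb Xn in auto)
    finally show ?thesis by simp
  qed
  have sn: "summable (\<lambda>n. norm (bt n))"
    by (rule summable_comparison_test[OF _ summable_geometric[of "norm x"]]) (use btn nx in auto)
  define b where "b = suminf bt"
  have bs: "bt sums b" unfolding b_def using summable_norm_cancel[OF sn] by (simp add: summable_sums)
  have bb: "?X sums (b * b)"
  proof -
    have "(\<lambda>k. \<Sum>i\<le>k. bt i * bt (k - i)) sums (b * b)"
      using Cauchy_product_sums[OF sn sn] by (simp add: b_def)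
    moreover have "(\<Sum>i\<le>k. bt i * bt (k - i)) = ?X k" for k
    proof -
      have "(\<Sum>i\<le>k. bt i * bt (k - i)) = (\<Sum>i\<le>k. scaleR (c i * c (k - i)) (?X k))"
        by (rule sum.cong[OF refl]) (simp add: bt_def Xadd)
      also have "\<dots> = scaleR (\<Sum>i\<le>k. c i * c (k - i)) (?X k)" by (simp add: scaleR_sum_left)
      also have "(\<Sum>i\<le>k. c i * c (k - i)) = 1" unfolding c_def by (rule c_conv)
      finally show ?thesis by simp
    qed
    ultimately show ?thesis by simp
  qed
  have bbpx: "b * b * (p - x) = p"
  proof -
    have "(\<lambda>n. ?X n * (p - x)) sums (b * b * (p - x))" by (rule sums_mult2[OF bb])
    moreover have "(\<lambda>n. ?X n - ?X (Suc n)) sums (p - 0)"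
      using telescope_sums'[OF Xlim] by simp
    moreover have "?X n * (p - x) = ?X n - ?X (Suc n)" for n
      by (simp add: right_diff_distrib Xp Xx)
    ultimately show ?thesis using sums_unique2 by fastforce
  qed
  have pb: "p * b = b"
  proof -
    have "(\<lambda>n. p * bt n) sums (p * b)" by (rule sums_mult[OF bs])
    moreover have "p * bt n = bt n" for n by (simp add: bt_def pX)
    ultimately show ?thesis using bs sums_unique2 by fastforce
  qed
  have bp: "b * p = b"
  proof -
    have "(\<lambda>n. bt n * p) sums (b * p)" by (rule sums_mult2[OF bs])
    moreover have "bt n * p = bt n" for n by (simp add: bt_def Xp)
    ultimately show ?thesis using bs sums_unique2 by fastforce
  qed
  have xb: "x * b = b * x"
  proof -
    have "(\<lambda>n. x * bt n) sums (x * b)" by (rule sums_mult[OF bs])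
    moreover have "(\<lambda>n. bt n * x) sums (b * x)" by (rule sums_mult2[OF bs])
    moreover have "x * bt n = bt n * x" for n by (simp add: bt_def xX)
    ultimately show ?thesis using sums_unique2 by fastforce
  qed
  have stb: "st b = b"
  proof -
    have "(\<lambda>n. st (bt n)) sums (st b)" by (rule bounded_linear.sums[OF bl_st bs])
    moreover have "st (bt n) = bt n" for n by (simp add: bt_def st_scaleR Xst)
    ultimately show ?thesis using bs sums_unique2 by fastforce
  qed
  define w where "w = r * b"
  have "st w * w = b * r * b" by (simp add: w_def st_mult stb rr mult.assoc flip: mult.assoc[of r r b])
  also have "\<dots> = b * (p * r * p) * b"
    by (metis bp pb mult.assoc)
  also have "p * r * p = p - x" by (simp add: x_def)
  also have "b * (p - x) * b = b * b * (p - x)"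
  proof -
    have "(p - x) * b = b * (p - x)" by (simp add: algebra_simps pb bp xb)
    then show ?thesis by (simp add: mult.assoc)
  qed
  finally have "st w * w = p" using bbpx by simp
  moreover have "r * w = w" by (simp add: w_def rr flip: mult.assoc)
  moreover have "w * p = w" by (simp add: w_def mult.assoc bp)
  ultimately show ?thesis by blast
qed

end

context cstar begin

lemma umul_assoc: "umul sc (umul sc a b) c = umul sc a (umul sc b c)"
  by (simp add: umul_def algebra_simps sc_add1 sc_add2 sc_sc sc_mult1 sc_mult2)

lemma umul_distl: "umul sc (a + b) c = umul sc a c + umul sc b c"
  by (simp add: umul_def algebra_simps sc_add1 sc_add2)

lemma umul_distr: "umul sc a (b + c) = umul sc a b + umul sc a c"
  by (simp add: umul_def algebra_simps sc_add1 sc_add2)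

lemma ustar_add: "ustar st (a + b) = ustar st a + ustar st b"
  by (simp add: ustar_def st_add)

lemma ustar_mul: "ustar st (umul sc a b) = umul sc (ustar st b) (ustar st a)"
  by (simp add: ustar_def umul_def st_add st_mult st_sc algebra_simps)

lemma ustar_ustar: "ustar st (ustar st a) = a"
  by (simp add: ustar_def)

end

sublocale cstar \<subseteq> U: invring "umul sc" "ustar st"
  by unfold_locales (simp_all add: umul_assoc umul_distl umul_distr ustar_add ustar_mul ustar_ustar)

sublocale cstar \<subseteq> A: invring "(*)" st
  by unfold_locales (simp_all add: algebra_simps st_add st_mult)

context cstar begin

lemma sum_pair0: "(\<Sum>l\<in>L. (f l, 0::complex)) = (sum f L, 0)"
  by (rule prod_eqI) (simp_all add: fst_sum snd_sum)

lemma uemb_mmul: "mmul (umul sc) k (uemb x) (uemb y) = uemb (mmul (*) k x y)"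
  by (simp add: mmul_def uemb_def umul_def sum_pair0 fun_eq_iff)

lemma madj_uemb: "madj (ustar st) (uemb x) = uemb (madj st x)"
  by (simp add: madj_def uemb_def ustar_def fun_eq_iff)

lemma uemb_dsum: "uemb (dsum m x n y) = dsum m (uemb x) n (uemb y)"
  by (simp add: dsum_def uemb_def fun_eq_iff zero_prod_def)

lemma msupp_uemb: "msupp a b x \<Longrightarrow> msupp a b (uemb x)"
  by (simp add: msupp_def uemb_def zero_prod_def)

lemma mproj_uemb: "mproj (*) st n x \<Longrightarrow> mproj (umul sc) (ustar st) n (uemb x)"
  by (simp add: mproj_def msupp_uemb uemb_mmul madj_uemb)

lemma mvn_uemb: "mvn (*) st m e n f \<Longrightarrow> mvn (umul sc) (ustar st) m (uemb e) n (uemb f)"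
  unfolding mvn_def by (metis msupp_uemb uemb_mmul madj_uemb)

end

lemma dsum_assoc: "dsum 1 X (Suc k) (dsum 1 Y k Z) = dsum 2 (dsum 1 X 1 Y) k Z"
  by (auto simp: dsum_def fun_eq_iff numeral_2_eq_2)

lemma dsum_zero_right: "msupp m m x \<Longrightarrow> dsum m x 0 z = x"
  by (auto simp: dsum_def fun_eq_iff msupp_def)

lemma dsum_zero_left: "msupp n n y \<Longrightarrow> dsum 0 z n y = y"
  by (auto simp: dsum_def fun_eq_iff msupp_def)

context cstar begin

lemma base_mvn:
  assumes p: "is_proj st p" and r: "is_proj st r" and w: "st w * w = p" "r * w = w" "w * p = w"
  defines "f \<equiv> w * st w"
  shows "mvn (*) st 2 (dsum 1 (elem_mat p) 1 (elem_mat (r - f))) 1 (elem_mat r)"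
    and "is_proj st (r - f)"
proof -
  have pp: "p * p = p" "st p = p" using p by (auto simp: is_proj_def)
  have rr: "r * r = r" "st r = r" using r by (auto simp: is_proj_def)
  have stf: "st f = f" by (simp add: f_def st_mult)
  have rf: "r * f = f" by (simp add: f_def w flip: mult.assoc)
  have fr: "f * r = f"
  proof -
    have "st w * r = st w" using w(2) rr by (metis st_mult)
    then show ?thesis by (simp add: f_def mult.assoc)
  qed
  have ff: "f * f = f"
  proof -
    have "f * f = w * (st w * w) * st w" by (simp add: f_def mult.assoc)
    then show ?thesis by (simp add: w f_def)
  qed
  have stwp: "p * st w = st w" using w(3) pp by (metis st_mult)
  have e1: "st w * (r - f) = 0"
  proof -
    have "st w * r = st w" using w(2) rr by (metis st_mult)
    moreover have "st w * f = st w" by (simp add: f_def w stwp flip: mult.assoc)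
    ultimately show ?thesis by (simp add: right_diff_distrib)
  qed
  have e2: "(r - f) * w = 0"
  proof -
    have "f * w = w" by (simp add: f_def mult.assoc w)
    then show ?thesis by (simp add: left_diff_distrib w)
  qed
  have e3: "(r - f) * (r - f) = r - f"
    by (simp add: algebra_simps rr rf fr ff)
  have str: "st (r - f) = r - f" by (simp add: st_diff rr stf)
  show "is_proj st (r - f)" using e3 str by (simp add: is_proj_def)
  define V :: "nat \<Rightarrow> nat \<Rightarrow> 'a" where "V = (\<lambda>i j. if i = 0 \<and> j = 0 then w else if i = 0 \<and> j = 1 then r - f else 0)"
  have "msupp 1 2 V" by (auto simp: msupp_def V_def)
  moreover have "mmul (*) 1 (madj st V) V = dsum 1 (elem_mat p) 1 (elem_mat (r - f))"
  proof (rule ext, rule ext)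
    fix i j
    show "mmul (*) 1 (madj st V) V i j = dsum 1 (elem_mat p) 1 (elem_mat (r - f)) i j"
      using w e1 e2 e3 str
      by (auto simp: mmul_def madj_def V_def dsum_def elem_mat_def numeral_2_eq_2 less_Suc_eq)
  qed
  moreover have "mmul (*) 2 V (madj st V) = elem_mat r"
  proof (rule ext, rule ext)
    fix i j
    have "(\<Sum>l<2. V i l * st (V j l)) = V i 0 * st (V j 0) + V i 1 * st (V j 1)"
      by (simp add: numeral_2_eq_2)
    then show "mmul (*) 2 V (madj st V) i j = elem_mat r i j"
      using e3 str by (auto simp: mmul_def madj_def V_def elem_mat_def f_def)
  qed
  ultimately show "mvn (*) st 2 (dsum 1 (elem_mat p) 1 (elem_mat (r - f))) 1 (elem_mat r)"
    unfolding mvn_def by blast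
qed

lemma mproj_elem: "is_proj st a \<Longrightarrow> mproj (*) st 1 (elem_mat a)"
  by (auto simp: is_proj_def mproj_def msupp_def mmul_def madj_def elem_mat_def fun_eq_iff)

end

context cstar begin

lemma transfer:
  assumes p: "is_proj st p" and r: "is_proj st r" and w: "st w * w = p" "r * w = w" "w * p = w"
    and le: "K0_le st sc (1, elem_mat r) (n, q)" and q: "mproj (*) st n q"
  shows "K0_le st sc (1, elem_mat p) (n, q)"
proof -
  from le obtain k r' where r': "mproj (*) st k r'"
    and eq: "K0_eq st sc (1 + k, dsum 1 (elem_mat r) k r') (n, q)"
    unfolding K0_le_def by auto
  from eq obtain k2 s where s: "mproj (umul sc) (ustar st) k2 s"
    and W: "mvn (umul sc) (ustar st) (1 + k + k2) (dsum (1 + k) (uemb (dsum 1 (elem_mat r) k r')) k2 s)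
              (n + k2) (dsum n (uemb q) k2 s)"
    unfolding K0_eq_def by auto
  define f where "f = w * st w"
  have base: "mvn (*) st 2 (dsum 1 (elem_mat p) 1 (elem_mat (r - f))) 1 (elem_mat r)"
    and hrf: "is_proj st (r - f)"
    using base_mvn[OF p r w] by (simp_all add: f_def)
  define r'' where "r'' = dsum 1 (elem_mat (r - f)) k r'"
  have r'': "mproj (*) st (1 + k) r''"
    unfolding r''_def by (rule A.mproj_dsum[OF mproj_elem[OF hrf] r'])
  define S where "S = dsum (1 + (1 + k)) (uemb (dsum 1 (elem_mat p) (1 + k) r'')) k2 s"
  define E where "E = dsum (1 + k) (uemb (dsum 1 (elem_mat r) k r')) k2 s"
  define F where "F = dsum n (uemb q) k2 s"
  have Sp: "mproj (umul sc) (ustar st) (1 + (1 + k) + k2) S"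
    unfolding S_def
    by (intro U.mproj_dsum s mproj_uemb A.mproj_dsum mproj_elem p r'')
  have Fp: "mproj (umul sc) (ustar st) (n + k2) F"
    unfolding F_def by (intro U.mproj_dsum s mproj_uemb q)
  have b1: "mvn (umul sc) (ustar st) 2 (uemb (dsum 1 (elem_mat p) 1 (elem_mat (r - f)))) 1 (uemb (elem_mat r))"
    by (rule mvn_uemb[OF base])
  have b2: "mvn (umul sc) (ustar st) (2 + k) (dsum 2 (uemb (dsum 1 (elem_mat p) 1 (elem_mat (r - f)))) k (uemb r'))
       (1 + k) (dsum 1 (uemb (elem_mat r)) k (uemb r'))"
    by (rule U.mvn_dsum[OF b1 U.mvn_refl[OF mproj_uemb[OF r']]])
  have b3: "mvn (umul sc) (ustar st) (2 + k + k2)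
       (dsum (2 + k) (dsum 2 (uemb (dsum 1 (elem_mat p) 1 (elem_mat (r - f)))) k (uemb r')) k2 s)
       (1 + k + k2) (dsum (1 + k) (dsum 1 (uemb (elem_mat r)) k (uemb r')) k2 s)"
    by (rule U.mvn_dsum[OF b2 U.mvn_refl[OF s]])
  have eS: "dsum (2 + k) (dsum 2 (uemb (dsum 1 (elem_mat p) 1 (elem_mat (r - f)))) k (uemb r')) k2 s = S"
  proof -
    have "uemb (dsum 1 (elem_mat p) (Suc k) r'') = uemb (dsum 2 (dsum 1 (elem_mat p) 1 (elem_mat (r - f))) k r')"
      by (simp only: r''_def dsum_assoc)
    also have "\<dots> = dsum 2 (uemb (dsum 1 (elem_mat p) 1 (elem_mat (r - f)))) k (uemb r')"
      by (rule uemb_dsum)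
    finally have "dsum 2 (uemb (dsum 1 (elem_mat p) 1 (elem_mat (r - f)))) k (uemb r')
        = uemb (dsum 1 (elem_mat p) (Suc k) r'')" by simp
    moreover have "(2::nat) + k = 1 + (1 + k)" by simp
    ultimately show ?thesis by (simp add: S_def)
  qed
  have eE: "dsum (1 + k) (dsum 1 (uemb (elem_mat r)) k (uemb r')) k2 s = E"
    by (simp add: E_def uemb_dsum)
  have "mvn (umul sc) (ustar st) (1 + (1 + k) + k2) S (1 + k + k2) E"
    using b3 unfolding eS eE by (simp add: add.assoc)
  then have "mvn (umul sc) (ustar st) (1 + (1 + k) + k2) S (n + k2) F"
    using U.mvn_compose[OF Sp Fp _ W[folded E_def F_def]] by blast
  then have "K0_eq st sc (1 + (1 + k), dsum 1 (elem_mat p) (1 + k) r'') (n, q)"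
    unfolding K0_eq_def S_def F_def using s by auto
  then show ?thesis unfolding K0_le_def using r'' by auto
qed

lemma zero_le:
  assumes q: "mproj (*) st n q"
  shows "K0_le st sc (1, elem_mat 0) (n, q)"
proof -
  define Z :: "nat \<Rightarrow> nat \<Rightarrow> 'a" where "Z = (\<lambda>_ _. 0)"
  define Zu :: "nat \<Rightarrow> nat \<Rightarrow> 'a \<times> complex" where "Zu = (\<lambda>_ _. 0)"
  have qs: "msupp n n q" using q by (simp add: mproj_def)
  have e0: "elem_mat (0::'a) = Z" by (simp add: elem_mat_def Z_def fun_eq_iff)
  have m1: "mvn (*) st 1 Z 0 Z"
    unfolding mvn_def by (rule exI[of _ Z]) (simp add: msupp_def Z_def mmul_def)
  have m2: "mvn (*) st (1 + n) (dsum 1 Z n q) (0 + n) (dsum 0 Z n q)"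
    by (rule A.mvn_dsum[OF m1 A.mvn_refl[OF q]])
  then have m3: "mvn (umul sc) (ustar st) (1 + n) (uemb (dsum 1 Z n q)) n (uemb q)"
    using dsum_zero_left[OF qs] mvn_uemb by fastforce
  have Zp: "mproj (umul sc) (ustar st) 0 Zu"
    by (simp add: mproj_def msupp_def Zu_def mmul_def madj_def ustar_def fun_eq_iff zero_prod_def)
  have s1: "msupp (1 + n) (1 + n) (uemb (dsum 1 Z n q))"
    using A.mvn_supp(1)[OF m2] by (rule msupp_uemb)
  have s2: "msupp n n (uemb q)" using qs by (rule msupp_uemb)
  have "mvn (umul sc) (ustar st) (1 + n + 0) (dsum (1 + n) (uemb (dsum 1 Z n q)) 0 Zu)
          (n + 0) (dsum n (uemb q) 0 Zu)"
    using m3 unfolding dsum_zero_right[OF s1] dsum_zero_right[OF s2] add_0_right .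
  then have "\<exists>k s. mproj (umul sc) (ustar st) k s \<and> mvn (umul sc) (ustar st) (1 + n + k)
        (dsum (1 + n) (uemb (dsum 1 Z n q)) k s) (n + k) (dsum n (uemb q) k s)"
    using Zp by (intro exI[of _ 0] exI[of _ Zu] conjI)
  then have "K0_eq st sc (1 + n, dsum 1 (elem_mat 0) n q) (n, q)"
    unfolding K0_eq_def e0 fst_conv snd_conv .
  then show ?thesis unfolding K0_le_def using q by auto
qed

end

theorem lemma3p6:
  fixes st :: "'a::{banach,real_normed_algebra} \<Rightarrow> 'a"
    and sc :: "complex \<Rightarrow> 'a \<Rightarrow> 'a"
    and p :: 'a and n :: nat and q :: "nat \<Rightarrow> nat \<Rightarrow> 'a"
  assumes "cstar_algebra st sc"
    and "is_proj st p"
    and "mproj (*) st n q"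
  shows "sval st sc (n, q) p =
           (if K0_le st sc (1, elem_mat p) (n, q) then 0 else 1)"
proof -
  interpret cstar st sc by unfold_locales (rule assms(1))
  have p: "is_proj st p" by fact
  have q: "mproj (*) st n q" by fact
  let ?S = "{norm (p - p * pa) | pa. is_proj st pa \<and> K0_le st sc (1, elem_mat pa) (n, q)}"
  show ?thesis
  proof (cases "K0_le st sc (1, elem_mat p) (n, q)")
    case True
    have pp: "p - p * p = 0" using p by (simp add: is_proj_def)
    have "0 \<in> ?S" using True p pp by force
    then have "Inf ?S = 0" by (rule cInf_eq_minimum) auto
    then show ?thesis using True by (simp add: sval_def)
  next
    case False
    have z: "K0_le st sc (1, elem_mat 0) (n, q)" by (rule zero_le[OF q])
    then have "p \<noteq> 0" using False by auto
    then have np: "norm p = 1" using proj_norm(2)[OF p] by simp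
    have "is_proj st (0::'a)" by (simp add: is_proj_def)
    then have "1 \<in> ?S" using z np by force
    moreover have "1 \<le> y" if "y \<in> ?S" for y
    proof -
      from that obtain r where r: "is_proj st r" "K0_le st sc (1, elem_mat r) (n, q)" and y: "y = norm (p - p * r)"
        by blast
      show ?thesis
      proof (rule ccontr)
        assume "\<not> 1 \<le> y"
        then have "norm (p - p * r) < 1" using y by simp
        then obtain w where "st w * w = p" "r * w = w" "w * p = w" using partial_iso[OF p r(1)] by blast
        then have "K0_le st sc (1, elem_mat p) (n, q)" using transfer[OF p r(1) _ _ _ r(2) q] by blast
        then show False using False by simp
      qed
    qed
    ultimately have "Inf ?S = 1" by (rule cInf_eq_minimum)
    then show ?thesis using False by (simp add: sval_def)
  qed
qed

end
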